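(* Let $m\ge 2$ be an integer and let $f(1,1,m)$ be the minimum number of sets in an antipodal $(1,m)$-fold cover of the circle $S^1$ with open sets. Then $f(1,1,m)=2+m$.
   Context: $S^1$ denotes the unit circle in $\mathbb{R}^{2}$ centered at the origin. A cover of $S^1$ is a (finite) family of subsets of $S^1$; it is an $n$-fold cover if every point belongs to at least $n$ of the sets. A cover is antipodal if none of its sets contains a pair of antipodal points $x,-x$. The open northern hemisphere is $\{x\in S^1: x_{2}>0\}$. For $m>n\ge 1$, an $(n,m)$-fold cover is an $n$-fold cover in which every point of the open northern hemisphere belongs to at least $m$ of the sets. *)

theory Defs
  imports "HOL-Analysis.Analysis"
begin

definition S1 :: "(real^2) set" where
  "S1 = sphere 0 1"

text \<open>A finite family of k sets, indexed by 0,...,k-1 (repetitions allowed),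
  is an antipodal (n,m)-fold cover of S^1 by open sets: each set is an open subset
  of S^1 (relative topology) containing no antipodal pair; every point of S^1 lies in
  at least n of the sets; every point of the open northern hemisphere (x_2 > 0)
  lies in at least m of the sets.\<close>
definition antipodal_open_nm_cover :: "nat \<Rightarrow> nat \<Rightarrow> nat \<Rightarrow> (nat \<Rightarrow> (real^2) set) \<Rightarrow> bool" where
  "antipodal_open_nm_cover n m k U \<longleftrightarrow>
     (\<forall>i<k. U i \<subseteq> S1 \<and> openin (top_of_set S1) (U i) \<and> (\<forall>x\<in>U i. - x \<notin> U i)) \<and>
     (\<forall>x\<in>S1. n \<le> card {i. i < k \<and> x \<in> U i}) \<and>
     (\<forall>x\<in>S1. x $ 2 > 0 \<longrightarrow> m \<le> card {i. i < k \<and> x \<in> U i})"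

definition f1 :: "nat \<Rightarrow> nat \<Rightarrow> nat" where
  "f1 n m = (LEAST k. \<exists>U. antipodal_open_nm_cover n m k U)"

end

theory Submission
  imports Defs
begin

lemma norm2: "norm (x::real^2) = sqrt ((x$1)^2 + (x$2)^2)"
  unfolding norm_vec_def L2_set_def by (simp add: UNIV_2)

lemma S1_iff: "(x::real^2) \<in> S1 \<longleftrightarrow> (x$1)^2 + (x$2)^2 = 1"
  unfolding S1_def by (simp add: norm2)

lemma g_cont: "continuous_on UNIV (\<lambda>t::real. (\<chi> i::2. if i = 1 then cos t else sin t))"
  apply (intro continuous_on_vec_lambda)
  subgoal for i by (cases "i = 1") (auto intro!: continuous_intros)
  done

lemma sq_small: "\<bar>a::real\<bar> < 1/2 \<Longrightarrow> a^2 < 1/4"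
proof -
  assume "\<bar>a\<bar> < 1/2"
  then have "\<bar>a\<bar>^2 < (1/2)^2" by (intro power_strict_mono) auto
  then show ?thesis by (simp add: power2_eq_square)
qed

lemma openin_S1: "open {x. P x} \<Longrightarrow> openin (top_of_set S1) {x\<in>S1. P x}"
proof -
  assume "open {x. P x}"
  then have "openin (top_of_set S1) (S1 \<inter> {x. P x})" by (rule openin_open_Int)
  moreover have "S1 \<inter> {x. P x} = {x\<in>S1. P x}" by auto
  ultimately show ?thesis by simp
qed

lemma upper:
  assumes "0 < m" shows "\<exists>U. antipodal_open_nm_cover 1 m (m+2) U"
proof -
  define U where "U = (\<lambda>i::nat. if i < m then {x\<in>S1. x$2 > 0}
     else if i = m then {x\<in>S1. x$1 < 1/2 \<and> x$2 < 1/2}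
     else {x\<in>S1. x$1 > -1/2 \<and> x$2 < 1/2})"
  have op1: "open {x::real^2. x$2 > 0}"
    using open_halfspace_component_gt_cart by blast
  have op2: "open {x::real^2. x$1 < 1/2 \<and> x$2 < 1/2}"
  proof -
    have eq: "{x::real^2. x$1 < 1/2 \<and> x$2 < 1/2} = {x. x$1 < 1/2} \<inter> {x. x$2 < 1/2}" by auto
    show ?thesis unfolding eq by (intro open_Int open_halfspace_component_lt_cart)
  qed
  have op3: "open {x::real^2. x$1 > -1/2 \<and> x$2 < 1/2}"
  proof -
    have eq: "{x::real^2. x$1 > -1/2 \<and> x$2 < 1/2} = {x. x$1 > -1/2} \<inter> {x. x$2 < 1/2}" by auto
    show ?thesis unfolding eq by (intro open_Int open_halfspace_component_lt_cart open_halfspace_component_gt_cart)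
  qed
  have A: "U i \<subseteq> S1 \<and> openin (top_of_set S1) (U i) \<and> (\<forall>x\<in>U i. - x \<notin> U i)" for i
  proof -
    have ne: False if "x \<in> S1" "\<bar>x$1\<bar> < 1/2" "\<bar>x$2\<bar> < 1/2" for x :: "real^2"
      using sq_small[OF that(2)] sq_small[OF that(3)] that(1) by (simp add: S1_iff)
    show ?thesis
    proof (intro conjI)
      show sub: "U i \<subseteq> S1" unfolding U_def by auto
      show "openin (top_of_set S1) (U i)" unfolding U_def using op1 op2 op3
        by (auto intro!: openin_S1)
      show "\<forall>x\<in>U i. - x \<notin> U i"
      proof
        fix x assume x: "x \<in> U i"
        show "- x \<notin> U i"
        proof
          assume mx: "- x \<in> U i"
          have xs: "x \<in> S1" using x sub by blast
          show False
          proof (cases "i < m")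
            case True then show ?thesis using x mx unfolding U_def by auto
          next
            case False
            have "\<bar>x$1\<bar> < 1/2 \<and> \<bar>x$2\<bar> < 1/2"
            proof (cases "i = m")
              case True
              then have "x$1 < 1/2 \<and> x$2 < 1/2" "(-x)$1 < 1/2 \<and> (-x)$2 < 1/2"
                using x mx False unfolding U_def by simp_all
              then show ?thesis by auto
            next
              case F2: False
              then have "x$1 > -1/2 \<and> x$2 < 1/2" "(-x)$1 > -1/2 \<and> (-x)$2 < 1/2"
                using x mx False unfolding U_def by simp_all
              then show ?thesis by auto
            qed
            then have "\<bar>x$1\<bar> < 1/2" "\<bar>x$2\<bar> < 1/2" by auto
            then show ?thesis using ne xs by blast
          qed
        qed
      qed
    qed
  qed
  have Ul: "U i = {x\<in>S1. x$2 > 0}" if "i < m" for i using that by (simp add: U_def)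
  have Um: "U m = {x\<in>S1. x$1 < 1/2 \<and> x$2 < 1/2}" by (simp add: U_def)
  have USm: "U (Suc m) = {x\<in>S1. x$1 > -1/2 \<and> x$2 < 1/2}" by (simp add: U_def)
  have B: "1 \<le> card {i. i < m+2 \<and> x \<in> U i}" if "x \<in> S1" for x
  proof -
    have "\<exists>j. j < m+2 \<and> x \<in> U j"
    proof (cases "x$2 > 0")
      case True then show ?thesis using Ul[OF \<open>0 < m\<close>] that \<open>0 < m\<close> by (intro exI[of _ 0]) auto
    next
      case False
      show ?thesis
      proof (cases "x$1 < 1/2")
        case True then show ?thesis using Um that False by (intro exI[of _ m]) auto
      next
        case F2: False then show ?thesis using USm that False by (intro exI[of _ "Suc m"]) auto
      qed
    qed
    then have "{i. i < m+2 \<and> x \<in> U i} \<noteq> {}" by blast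
    moreover have "finite {i. i < m+2 \<and> x \<in> U i}" by auto
    ultimately show ?thesis by (metis card_0_eq less_one not_less)
  qed
  have C: "m \<le> card {i. i < m+2 \<and> x \<in> U i}" if "x \<in> S1" "x$2 > 0" for x
  proof -
    have "{..<m} \<subseteq> {i. i < m+2 \<and> x \<in> U i}" using that Ul by auto
    then have "card {..<m} \<le> card {i. i < m+2 \<and> x \<in> U i}" by (intro card_mono) auto
    then show ?thesis by simp
  qed
  have "(\<forall>i<m+2. U i \<subseteq> S1 \<and> openin (top_of_set S1) (U i) \<and> (\<forall>x\<in>U i. - x \<notin> U i))"
    using A by blast
  moreover have "\<forall>x\<in>S1. 1 \<le> card {i. i < m+2 \<and> x \<in> U i}" using B by blast
  moreover have "\<forall>x\<in>S1. x $ 2 > 0 \<longrightarrow> m \<le> card {i. i < m+2 \<and> x \<in> U i}" using C by blast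
  ultimately have "antipodal_open_nm_cover 1 m (m+2) U"
    unfolding antipodal_open_nm_cover_def by (intro conjI)
  then show ?thesis by blast
qed

lemma lower:
  assumes cov: "antipodal_open_nm_cover 1 m k U" and km: "k \<le> m + 1"
  shows False
proof -
  define C where "C x = {i. i < k \<and> x \<in> U i}" for x
  have fin: "finite (C x)" for x unfolding C_def by auto
  have U1: "\<And>i. i < k \<Longrightarrow> U i \<subseteq> S1 \<and> openin (top_of_set S1) (U i) \<and> (\<forall>x\<in>U i. - x \<notin> U i)"
    and c1: "\<And>x. x \<in> S1 \<Longrightarrow> 1 \<le> card (C x)"
    and cm: "\<And>x. x \<in> S1 \<Longrightarrow> x$2 > 0 \<Longrightarrow> m \<le> card (C x)"
    using cov unfolding antipodal_open_nm_cover_def C_def by auto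
  have S1neg: "- x \<in> S1" if "x \<in> S1" for x using that unfolding S1_def by auto
  have le1: "card (C y) \<le> 1" if y: "y \<in> S1" "y$2 < 0" for y
  proof -
    have "m \<le> card (C (-y))" using cm[OF S1neg[OF y(1)]] y(2) by simp
    moreover have "C y \<inter> C (-y) = {}" unfolding C_def using U1 by fastforce
    moreover have "C y \<union> C (-y) \<subseteq> {..<k}" unfolding C_def by auto
    ultimately have "card (C y) + card (C (-y)) \<le> k"
      by (metis card_Un_disjoint card_lessThan card_mono fin finite_lessThan)
    then show ?thesis using \<open>m \<le> card (C (-y))\<close> km by linarith
  qed
  have uniq: "i = j" if "y \<in> S1" "y$2 < 0" "i < k" "j < k" "y \<in> U i" "y \<in> U j" for y i j
  proof -
    have "i \<in> C y" "j \<in> C y" using that unfolding C_def by auto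
    with le1[OF that(1,2)] show ?thesis using card_le_Suc0_iff_eq[OF fin] by auto
  qed
  have exi: "\<exists>i<k. x \<in> U i" if "x \<in> S1" for x
  proof -
    have "C x \<noteq> {}" using c1[OF that] by auto
    then show ?thesis unfolding C_def by auto
  qed
  have "\<forall>i. \<exists>Op. i < k \<longrightarrow> open Op \<and> U i = S1 \<inter> Op"
    using U1 by (meson openin_open)
  then obtain Op where Op: "\<And>i. i < k \<Longrightarrow> open (Op i) \<and> U i = S1 \<inter> Op i" by metis
  define g where "g t = (\<chi> i::2. if i = 1 then cos t else sin t)" for t :: real
  have g1: "g t $ 1 = cos t" and g2: "g t $ 2 = sin t" for t unfolding g_def by auto
  have gS: "g t \<in> S1" for t unfolding S1_iff g1 g2 by simp
  have gc: "continuous_on UNIV g" unfolding g_def by (rule g_cont)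
  have gopen: "open (g -` V)" if "open V" for V
    using gc that by (simp add: continuous_on_open_vimage[OF open_UNIV])
  define p where "p = g pi"
  have mp: "- p = g (2*pi)"
    unfolding p_def by (simp add: vec_eq_iff g1 g2 forall_2)
  obtain a where a: "a < k" "p \<in> U a" using exi[OF gS] p_def by blast
  obtain b where b: "b < k" "- p \<in> U b" using exi[OF gS] mp by metis
  have "pi \<in> g -` Op a" using a Op p_def by auto
  then obtain e where e: "e > 0" "ball pi e \<subseteq> g -` Op a"
    using gopen Op a(1) by (meson open_contains_ball)
  define t1 where "t1 = pi + min e pi / 2"
  have t1: "pi < t1" "t1 < 2*pi" "t1 \<in> g -` Op a"
  proof -
    have "min e pi \<le> pi" "min e pi > 0" using e pi_gt_zero by auto
    moreover have "\<bar>pi - t1\<bar> < e" unfolding t1_def using e pi_gt_zero by auto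
    moreover have "t1 \<in> ball pi e" using \<open>\<bar>pi - t1\<bar> < e\<close> by (simp add: dist_real_def)
    ultimately show "pi < t1" "t1 < 2*pi" "t1 \<in> g -` Op a"
      using e unfolding t1_def by (linarith, linarith, blast)
  qed
  have "2*pi \<in> g -` Op b" using b Op mp by auto
  then obtain d where d: "d > 0" "ball (2*pi) d \<subseteq> g -` Op b"
    using gopen Op b(1) by (meson open_contains_ball)
  define t2 where "t2 = 2*pi - min d pi / 2"
  have t2: "pi < t2" "t2 < 2*pi" "t2 \<in> g -` Op b"
  proof -
    have "min d pi \<le> pi" "min d pi > 0" using d pi_gt_zero by auto
    moreover have "\<bar>2*pi - t2\<bar> < d" unfolding t2_def using d pi_gt_zero by auto
    moreover have "t2 \<in> ball (2*pi) d" using \<open>\<bar>2*pi - t2\<bar> < d\<close> by (simp add: dist_real_def)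
    ultimately show "pi < t2" "t2 < 2*pi" "t2 \<in> g -` Op b"
      using d unfolding t2_def by (linarith, linarith, blast)
  qed
  define A where "A = g -` Op a"
  define B where "B = g -` (\<Union>i\<in>{i. i < k \<and> i \<noteq> a}. Op i)"
  let ?T = "{pi<..<2*pi}"
  have oA: "open A" unfolding A_def using gopen Op a(1) by auto
  have oB: "open B" unfolding B_def using gopen Op by (intro gopen) auto
  have gneg: "g t $ 2 < 0" if "t \<in> ?T" for t using that sin_lt_zero by (auto simp: g2)
  have cover: "?T \<subseteq> A \<union> B"
  proof
    fix t assume t: "t \<in> ?T"
    obtain i where i: "i < k" "g t \<in> U i" using exi[OF gS] by blast
    then show "t \<in> A \<union> B" unfolding A_def B_def using Op by (cases "i = a") auto
  qed
  have disj: "A \<inter> B \<inter> ?T = {}"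
  proof (rule ccontr)
    assume "A \<inter> B \<inter> ?T \<noteq> {}"
    then obtain t i where t: "t \<in> ?T" "g t \<in> Op a" "i < k" "i \<noteq> a" "g t \<in> Op i"
      unfolding A_def B_def by blast
    then have "g t \<in> U a" "g t \<in> U i" using Op a(1) gS by auto
    then show False using uniq[OF gS gneg[OF t(1)] a(1) t(3)] t(4) by auto
  qed
  have "A \<inter> ?T \<noteq> {}" using t1 unfolding A_def by auto
  moreover have "A \<inter> ?T = {} \<or> B \<inter> ?T = {}"
    by (rule connectedD[OF connected_Ioo oA oB disj cover])
  ultimately have BT: "B \<inter> ?T = {}" by (simp only: simp_thms)
  have t2T: "t2 \<in> ?T" using t2(1,2) by (simp only: greaterThanLessThan_iff)
  have "b = a"
  proof (rule ccontr)
    assume "b \<noteq> a"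
    then have "t2 \<in> B" unfolding B_def using t2(3) b(1) by blast
    then show False using BT t2T by blast
  qed
  then have "p \<in> U a" "- p \<in> U a" using a b by auto
  then show False using U1 a(1) by blast
qed

theorem proposition1:
  fixes m :: nat
  assumes "m \<ge> 2"
  shows "f1 1 m = 2 + m"
  unfolding f1_def
proof (rule Least_equality)
  show "\<exists>U. antipodal_open_nm_cover 1 m (2 + m) U"
    using upper[of m] assms by (simp add: add.commute)
next
  fix k assume "\<exists>U. antipodal_open_nm_cover 1 m k U"
  then obtain U where U: "antipodal_open_nm_cover 1 m k U" by blast
  show "2 + m \<le> k"
  proof (rule ccontr)
    assume "\<not> 2 + m \<le> k"
    then have "k \<le> m + 1" by simp
    then show False using lower[OF U] by blast
  qed
qed

end
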